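(* Consider a budget-additive NSW instance with $v_{ij}\le c_i$ for all $i,j$ whose associated market ${\mathcal M}$ is money clearing, let $({\mathbf x},{\mathbf p})$ be a thrifty and modest equilibrium of ${\mathcal M}$, and let $v',c'$ be the normalized values and caps (see context), with normalized valuations $v'_i(S_i)=\min(c'_i,\sum_{j\in S_i}v'_{ij})$. Let $B_c$ be the set of buyers capped in $({\mathbf x},{\mathbf p})$. Then for every integral allocation $S^*$ (in particular one maximizing the Nash social welfare w.r.t. $v'$), $$\Big(\prod_{i\in B}v'_i(S^*_i)\Big)^{1/n}\le\Big(\prod_{i\in B_c}c'_i\prod_{j\in G:\,p_j>1}p_j\Big)^{1/n}.$$
   Context: Budget-additive NSW instance: agents $B$ ($|B|=n$), indivisible items $G$ ($|G|=m\ge n$), values $v_{ij}\ge0$, caps $c_i>0$, valuation $v_i(S_i)=\min(c_i,\sum_{j\in S_i}v_{ij})$; NSW of an allocation is $(\prod_i v_i(S_i))^{1/n}$. Associated market ${\mathcal M}$: Fisher market with buyer $i$ per agent, divisible unit-supply good $j$ per item, budget $m_i=1$, value $u_{ij}=v_{ij}$, utility cap $c_i$, earning cap $d_j=1$. Fisher market with earning and utility limits: buyers $B$, divisible goods $G$ each with unit supply; buyer $i$ has values $u_{ij}\ge0$, budget $m_i\ge0$, utility cap $c_i>0$; good $j$ has earning cap $d_j>0$. For a bundle ${\mathbf x}_i$ with $x_{ij}\ge0$, $u_i({\mathbf x}_i)=\min(c_i,\sum_j u_{ij}x_{ij})$. Given prices ${\mathbf p}\ge0$, the MBB ratio is $\alpha_i=\max_j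 u_{ij}/p_j$ ($0/0=0$, $u/0=\infty$ for $u>0$); $j$ is an MBB good of $i$ if $u_{ij}/p_j=\alpha_i$. A demand bundle maximizes $u_i({\mathbf x}_i)$ subject to $\sum_j p_jx_{ij}\le m_i$; thrifty: $x_{ij}>0$ only for MBB goods; modest: $\sum_ju_{ij}x_{ij}\le c_i$. Modest supply: $e_j=\min(1,d_j/p_j)$ ($=1$ if $p_j=0$). A thrifty and modest equilibrium is $({\mathbf x},{\mathbf p})$ with ${\mathbf p}\ge0$, $x_j=\sum_ix_{ij}\le e_j$, each ${\mathbf x}_i$ a thrifty and modest demand bundle, and $p_j(e_j-x_j)=0$. Buyer $i$ is capped if $u_i({\mathbf x}_i)=c_i$. Money clearing: for all $\hat B\subseteq B$, $\sum_{i\in\hat B}m_i\le\sum_{j\in N(\hat B)}d_j$, $N(\hat B)=\{j:u_{ij}>0\text{ for some }i\in\hat B\}$. Normalization: $G_0=\{j:p_j=0\}$, $B_0=\{i:v_{ij}>0\text{ for some }j\in G_0\}$. For $i\notin B_0$ with MBB ratio $\alpha_i$ at ${\mathbf p}$, $v'_{ij}=v_{ij}/\alpha_i$ and $c'_i=c_i/\alpha_i$; for $i\in B_0$, $v'_{ij}=v_{ij}$ and $c'_i=c_i$. *)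

theory Defs
  imports "HOL-Analysis.Analysis"
begin

text \<open>Buyers of type 'a, goods of type 'b. Values u, budgets m, utility caps c,
  earning caps d, prices p. A bundle of buyer i is a function 'b => real (only its
  values on the goods set G matter).\<close>

definition bb_ratio :: "real \<Rightarrow> real \<Rightarrow> ereal" where
  "bb_ratio u q = (if q = 0 then (if u > 0 then \<infinity> else 0) else ereal (u / q))"

definition mbb_ratio :: "'b set \<Rightarrow> ('a \<Rightarrow> 'b \<Rightarrow> real) \<Rightarrow> ('b \<Rightarrow> real) \<Rightarrow> 'a \<Rightarrow> ereal" where
  "mbb_ratio G u p i = Max ((\<lambda>j. bb_ratio (u i j) (p j)) ` G)"

definition is_mbb :: "'b set \<Rightarrow> ('a \<Rightarrow> 'b \<Rightarrow> real) \<Rightarrow> ('b \<Rightarrow> real) \<Rightarrow> 'a \<Rightarrow> 'b \<Rightarrow> bool" where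
  "is_mbb G u p i j \<longleftrightarrow> j \<in> G \<and> bb_ratio (u i j) (p j) = mbb_ratio G u p i"

definition bundle_util :: "'b set \<Rightarrow> ('a \<Rightarrow> 'b \<Rightarrow> real) \<Rightarrow> ('a \<Rightarrow> real) \<Rightarrow> 'a \<Rightarrow> ('b \<Rightarrow> real) \<Rightarrow> real" where
  "bundle_util G u c i y = min (c i) (\<Sum>j\<in>G. u i j * y j)"

definition affordable :: "'b set \<Rightarrow> ('a \<Rightarrow> real) \<Rightarrow> ('b \<Rightarrow> real) \<Rightarrow> 'a \<Rightarrow> ('b \<Rightarrow> real) \<Rightarrow> bool" where
  "affordable G m p i y \<longleftrightarrow> (\<forall>j\<in>G. y j \<ge> 0) \<and> (\<Sum>j\<in>G. p j * y j) \<le> m i"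

definition demand_bundle ::
  "'b set \<Rightarrow> ('a \<Rightarrow> 'b \<Rightarrow> real) \<Rightarrow> ('a \<Rightarrow> real) \<Rightarrow> ('a \<Rightarrow> real) \<Rightarrow> ('b \<Rightarrow> real) \<Rightarrow> 'a \<Rightarrow> ('b \<Rightarrow> real) \<Rightarrow> bool" where
  "demand_bundle G u c m p i y \<longleftrightarrow> affordable G m p i y \<and>
     (\<forall>z. affordable G m p i z \<longrightarrow> bundle_util G u c i z \<le> bundle_util G u c i y)"

definition thrifty :: "'b set \<Rightarrow> ('a \<Rightarrow> 'b \<Rightarrow> real) \<Rightarrow> ('b \<Rightarrow> real) \<Rightarrow> 'a \<Rightarrow> ('b \<Rightarrow> real) \<Rightarrow> bool" where
  "thrifty G u p i y \<longleftrightarrow> (\<forall>j\<in>G. y j > 0 \<longrightarrow> is_mbb G u p i j)"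

definition modest :: "'b set \<Rightarrow> ('a \<Rightarrow> 'b \<Rightarrow> real) \<Rightarrow> ('a \<Rightarrow> real) \<Rightarrow> 'a \<Rightarrow> ('b \<Rightarrow> real) \<Rightarrow> bool" where
  "modest G u c i y \<longleftrightarrow> (\<Sum>j\<in>G. u i j * y j) \<le> c i"

definition modest_supply :: "('b \<Rightarrow> real) \<Rightarrow> ('b \<Rightarrow> real) \<Rightarrow> 'b \<Rightarrow> real" where
  "modest_supply d p j = (if p j = 0 then 1 else min 1 (d j / p j))"

definition tm_equilibrium ::
  "'a set \<Rightarrow> 'b set \<Rightarrow> ('a \<Rightarrow> 'b \<Rightarrow> real) \<Rightarrow> ('a \<Rightarrow> real) \<Rightarrow> ('a \<Rightarrow> real) \<Rightarrow> ('b \<Rightarrow> real)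
   \<Rightarrow> ('a \<Rightarrow> 'b \<Rightarrow> real) \<Rightarrow> ('b \<Rightarrow> real) \<Rightarrow> bool" where
  "tm_equilibrium B G u c m d x p \<longleftrightarrow>
     (\<forall>j\<in>G. p j \<ge> 0) \<and>
     (\<forall>j\<in>G. (\<Sum>i\<in>B. x i j) \<le> modest_supply d p j) \<and>
     (\<forall>i\<in>B. demand_bundle G u c m p i (x i) \<and> thrifty G u p i (x i) \<and> modest G u c i (x i)) \<and>
     (\<forall>j\<in>G. p j * (modest_supply d p j - (\<Sum>i\<in>B. x i j)) = 0)"

definition capped_buyers ::
  "'a set \<Rightarrow> 'b set \<Rightarrow> ('a \<Rightarrow> 'b \<Rightarrow> real) \<Rightarrow> ('a \<Rightarrow> real) \<Rightarrow> ('a \<Rightarrow> 'b \<Rightarrow> real) \<Rightarrow> 'a set" where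
  "capped_buyers B G u c x = {i\<in>B. bundle_util G u c i (x i) = c i}"

definition money_clearing ::
  "'a set \<Rightarrow> 'b set \<Rightarrow> ('a \<Rightarrow> 'b \<Rightarrow> real) \<Rightarrow> ('a \<Rightarrow> real) \<Rightarrow> ('b \<Rightarrow> real) \<Rightarrow> bool" where
  "money_clearing B G u m d \<longleftrightarrow>
     (\<forall>B'\<subseteq>B. (\<Sum>i\<in>B'. m i) \<le> (\<Sum>j\<in>{j\<in>G. \<exists>i\<in>B'. u i j > 0}. d j))"

definition zero_goods :: "'b set \<Rightarrow> ('b \<Rightarrow> real) \<Rightarrow> 'b set" where
  "zero_goods G p = {j\<in>G. p j = 0}"

definition zero_buyers :: "'a set \<Rightarrow> 'b set \<Rightarrow> ('a \<Rightarrow> 'b \<Rightarrow> real) \<Rightarrow> ('b \<Rightarrow> real) \<Rightarrow> 'a set" where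
  "zero_buyers B G v p = {i\<in>B. \<exists>j\<in>zero_goods G p. v i j > 0}"

text \<open>For buyers outside B_0 the MBB ratio is finite (no positive-value good has price 0).\<close>
definition norm_val ::
  "'a set \<Rightarrow> 'b set \<Rightarrow> ('a \<Rightarrow> 'b \<Rightarrow> real) \<Rightarrow> ('b \<Rightarrow> real) \<Rightarrow> 'a \<Rightarrow> 'b \<Rightarrow> real" where
  "norm_val B G v p i j = (if i \<in> zero_buyers B G v p then v i j
                           else v i j / real_of_ereal (mbb_ratio G v p i))"

definition norm_cap ::
  "'a set \<Rightarrow> 'b set \<Rightarrow> ('a \<Rightarrow> 'b \<Rightarrow> real) \<Rightarrow> ('a \<Rightarrow> real) \<Rightarrow> ('b \<Rightarrow> real) \<Rightarrow> 'a \<Rightarrow> real" where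
  "norm_cap B G v c p i = (if i \<in> zero_buyers B G v p then c i
                           else c i / real_of_ereal (mbb_ratio G v p i))"

definition ba_val :: "('a \<Rightarrow> 'b \<Rightarrow> real) \<Rightarrow> ('a \<Rightarrow> real) \<Rightarrow> 'a \<Rightarrow> 'b set \<Rightarrow> real" where
  "ba_val v c i S = min (c i) (\<Sum>j\<in>S. v i j)"

definition integral_allocation :: "'a set \<Rightarrow> 'b set \<Rightarrow> ('a \<Rightarrow> 'b set) \<Rightarrow> bool" where
  "integral_allocation B G S \<longleftrightarrow>
     (\<forall>i\<in>B. S i \<subseteq> G) \<and> (\<forall>i\<in>B. \<forall>k\<in>B. i \<noteq> k \<longrightarrow> S i \<inter> S k = {}) \<and> (\<Union>i\<in>B. S i) = G"

end

theory Submission imports Defs begin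

lemma mbb_ge: "finite G \<Longrightarrow> j \<in> G \<Longrightarrow> bb_ratio (u i j) (p j) \<le> mbb_ratio G u p i"
  unfolding mbb_ratio_def by (rule Max_ge) auto

lemma mbb_in: "finite G \<Longrightarrow> G \<noteq> {} \<Longrightarrow> \<exists>j\<in>G. mbb_ratio G u p i = bb_ratio (u i j) (p j)"
proof -
  assume a: "finite G" "G \<noteq> {}"
  have "Max ((\<lambda>j. bb_ratio (u i j) (p j)) ` G) \<in> (\<lambda>j. bb_ratio (u i j) (p j)) ` G"
    using a by (intro Max_in) auto
  then show ?thesis unfolding mbb_ratio_def by auto
qed

lemma alpha_fin:
  assumes "finite G" "G \<noteq> {}" "\<forall>j\<in>G. p j \<ge> 0" "\<forall>j\<in>G. v i j \<ge> 0" "i \<in> B"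
    "i \<notin> zero_buyers B G v p"
  shows "\<exists>a\<ge>0. mbb_ratio G v p i = ereal a"
proof -
  from mbb_in[OF assms(1,2), of v p i] obtain j where j: "j\<in>G" "mbb_ratio G v p i = bb_ratio (v i j) (p j)" by blast
  have nz: "\<not> (p j = 0 \<and> v i j > 0)" using assms(5,6) j(1) by (auto simp: zero_buyers_def zero_goods_def)
  show ?thesis
  proof (cases "p j = 0")
    case True
    then show ?thesis using j nz by (intro exI[of _ 0]) (auto simp: bb_ratio_def zero_ereal_def)
  next
    case False
    then show ?thesis using j assms(3,4) by (intro exI[of _ "v i j / p j"]) (auto simp: bb_ratio_def)
  qed
qed

lemma nv_le_p:
  assumes "finite G" "G \<noteq> {}" "\<forall>j\<in>G. p j \<ge> 0" "\<forall>j\<in>G. v i j \<ge> 0" "i \<in> B"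
    "i \<notin> zero_buyers B G v p" "j \<in> G"
  shows "norm_val B G v p i j \<le> p j \<and> 0 \<le> norm_val B G v p i j"
proof -
  obtain a where a: "a \<ge> 0" "mbb_ratio G v p i = ereal a" using alpha_fin[OF assms(1-6)] by blast
  have nv: "norm_val B G v p i j = v i j / a" using a assms(6) by (simp add: norm_val_def)
  have le: "bb_ratio (v i j) (p j) \<le> ereal a" using mbb_ge[OF assms(1,7), of v i p] a by simp
  have nz: "\<not> (p j = 0 \<and> v i j > 0)" using assms(5,6,7) by (auto simp: zero_buyers_def zero_goods_def)
  have "v i j / a \<le> p j"
  proof (cases "a = 0 \<or> p j = 0")
    case True
    then show ?thesis using nz assms(3,4,7) by auto
  next
    case False
    then have "v i j / p j \<le> a" using le by (simp add: bb_ratio_def)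
    moreover have "p j > 0" using False assms(3,7) by force
    ultimately have "v i j \<le> a * p j" by (simp add: divide_le_eq mult.commute)
    then show ?thesis using False a(1) by (simp add: divide_le_eq mult.commute)
  qed
  then show ?thesis using nv a(1) assms(4,7) by simp
qed

lemma B0_capped:
  assumes fin: "finite G" and i: "i \<in> zero_buyers B G v p"
    and dem: "demand_bundle G v c m p i y" and cpos: "c i > 0" and vn: "\<forall>j\<in>G. v i j \<ge> 0"
  shows "bundle_util G v c i y = c i"
proof -
  from i obtain j0 where j0: "j0 \<in> G" "p j0 = 0" "v i j0 > 0"
    by (auto simp: zero_buyers_def zero_goods_def)
  from dem have aff: "affordable G m p i y" and opt: "\<And>z. affordable G m p i z \<Longrightarrow> bundle_util G v c i z \<le> bundle_util G v c i y"
    by (auto simp: demand_bundle_def)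
  define k where "k = c i / v i j0"
  have kpos: "k > 0" using cpos j0 by (simp add: k_def)
  define z where "z = (\<lambda>j. y j + (if j = j0 then k else 0))"
  have e1: "(\<Sum>j\<in>G. p j * z j) = (\<Sum>j\<in>G. p j * y j + (if j = j0 then p j * k else 0))"
    by (rule sum.cong) (auto simp: z_def algebra_simps)
  have sp: "(\<Sum>j\<in>G. p j * z j) = (\<Sum>j\<in>G. p j * y j)"
    unfolding e1 sum.distrib using fin j0 by (simp add: sum.delta)
  have e2: "(\<Sum>j\<in>G. v i j * z j) = (\<Sum>j\<in>G. v i j * y j + (if j = j0 then v i j * k else 0))"
    by (rule sum.cong) (auto simp: z_def algebra_simps)
  have sv: "(\<Sum>j\<in>G. v i j * z j) = (\<Sum>j\<in>G. v i j * y j) + c i"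
    unfolding e2 sum.distrib using fin j0 by (simp add: sum.delta k_def)
  have yn: "\<forall>j\<in>G. y j \<ge> 0" using aff by (simp add: affordable_def)
  have svy: "(\<Sum>j\<in>G. v i j * y j) \<ge> 0" using yn vn by (intro sum_nonneg) auto
  have "affordable G m p i z" using aff yn kpos sp by (auto simp: affordable_def z_def)
  then have "bundle_util G v c i z \<le> bundle_util G v c i y" by (rule opt)
  moreover have "bundle_util G v c i z = c i" using sv svy by (simp add: bundle_util_def)
  ultimately show ?thesis by (simp add: bundle_util_def)
qed

lemma B0_spend:
  assumes fin: "finite G" and i: "i \<in> zero_buyers B G v p" and yn: "\<forall>j\<in>G. y j \<ge> 0"
    and th: "thrifty G v p i y"
  shows "(\<Sum>j\<in>G. p j * y j) = 0"
proof -
  from i obtain j0 where j0: "j0 \<in> G" "p j0 = 0" "v i j0 > 0"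
    by (auto simp: zero_buyers_def zero_goods_def)
  have "\<infinity> \<le> mbb_ratio G v p i" using mbb_ge[OF fin j0(1), of v i p] j0 by (simp add: bb_ratio_def)
  then have inf: "mbb_ratio G v p i = \<infinity>" by simp
  have "p j * y j = 0" if j: "j \<in> G" for j
  proof (cases "y j > 0")
    case True
    then have "is_mbb G v p i j" using th j by (simp add: thrifty_def)
    then have "p j = 0" using inf by (auto simp: is_mbb_def bb_ratio_def split: if_splits)
    then show ?thesis by simp
  next
    case False
    then show ?thesis using yn j by force
  qed
  then show ?thesis by (intro sum.neutral) blast
qed

lemma capped_spend:
  assumes fin: "finite G" "G \<noteq> {}" "\<forall>j\<in>G. p j \<ge> 0" "\<forall>j\<in>G. v i j \<ge> 0" "i \<in> B"
    "i \<notin> zero_buyers B G v p"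
    and yn: "\<forall>j\<in>G. y j \<ge> 0" and th: "thrifty G v p i y" and md: "modest G v c i y"
    and cap: "bundle_util G v c i y = c i" and cpos: "c i > 0"
  shows "norm_cap B G v c p i = (\<Sum>j\<in>G. p j * y j) \<and> 0 < norm_cap B G v c p i"
proof -
  obtain a where a: "a \<ge> 0" "mbb_ratio G v p i = ereal a" using alpha_fin[OF assms(1-6)] by blast
  have nz: "\<And>j. j \<in> G \<Longrightarrow> \<not> (p j = 0 \<and> v i j > 0)" using assms(5,6) by (auto simp: zero_buyers_def zero_goods_def)
  have each: "v i j * y j = a * (p j * y j)" if j: "j \<in> G" for j
  proof (cases "y j > 0")
    case True
    then have m: "bb_ratio (v i j) (p j) = ereal a" using th j a by (simp add: thrifty_def is_mbb_def)
    show ?thesis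
    proof (cases "p j = 0")
      case True
      then show ?thesis using m nz[OF j] assms(4) j by (auto simp: bb_ratio_def zero_ereal_def)
    next
      case False
      then have "v i j / p j = a" using m by (simp add: bb_ratio_def)
      then show ?thesis using False by (auto simp: field_simps)
    qed
  next
    case False
    then show ?thesis using yn j by force
  qed
  have "(\<Sum>j\<in>G. v i j * y j) = a * (\<Sum>j\<in>G. p j * y j)"
    unfolding sum_distrib_left by (rule sum.cong) (auto simp: each)
  moreover have "(\<Sum>j\<in>G. v i j * y j) = c i" using cap md by (auto simp: bundle_util_def modest_def min_def split: if_splits)
  ultimately have eq: "a * (\<Sum>j\<in>G. p j * y j) = c i" by simp
  then have an: "a \<noteq> 0" using cpos by auto
  have nc: "norm_cap B G v c p i = c i / a" using a assms(6) by (simp add: norm_cap_def)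
  show ?thesis unfolding nc using eq an a(1) cpos by (auto simp: field_simps)
qed

lemma key_ineq:
  fixes c P E :: real
  assumes "0 < c" "c \<le> 1" "1 \<le> P" "0 \<le> E"
  shows "min c (P*E) \<le> P * c * exp (E - c)"
proof (cases "c \<le> E")
  case True
  have "1 \<le> exp (E - c)" using True by simp
  then have "c \<le> P * c * exp (E - c)" using assms
    by (metis mult_le_cancel_left2 mult_mono' less_eq_real_def mult.commute mult.left_neutral mult_mono zero_le_one)
  then show ?thesis by simp
next
  case False
  have "1 + (E - c) \<le> exp (E - c)" by (rule exp_ge_add_one_self)
  then have "c * (1 + (E - c)) \<le> c * exp (E - c)" using assms by simp
  moreover have "E \<le> c * (1 + (E - c))"
  proof -
    have "0 \<le> (1-c)*(c-E)" using assms False by (intro mult_nonneg_nonneg) auto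
    then show ?thesis by (simp add: algebra_simps)
  qed
  ultimately have "E \<le> c * exp (E - c)" by linarith
  then have "P * E \<le> P * (c * exp (E - c))" using assms by simp
  then show ?thesis by (simp add: mult.assoc)
qed

lemma le_prod_ge1:
  fixes f :: "'b \<Rightarrow> real"
  assumes "finite S" "j \<in> S" "\<forall>k\<in>S. 1 \<le> f k"
  shows "f j \<le> prod f S"
proof -
  have "prod f S = f j * prod f (S - {j})" using assms by (simp add: prod.remove)
  moreover have "1 \<le> prod f (S - {j})" using assms by (intro prod_ge_1) auto
  moreover have "0 \<le> f j" using assms by force
  ultimately show ?thesis by (metis mult_le_cancel_left1 order_less_le not_le)
qed

lemma bin_bound:
  fixes p :: "'b \<Rightarrow> real"
  assumes "finite S" "\<forall>j\<in>S. p j \<ge> 0"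
  shows "(\<Sum>j\<in>S. p j) \<le> (\<Prod>j\<in>S. max (p j) 1) * (\<Sum>j\<in>S. min (p j) 1)"
proof -
  let ?P = "\<Prod>j\<in>S. max (p j) 1"
  have P1: "1 \<le> ?P" by (intro prod_ge_1) auto
  have "p j \<le> ?P * min (p j) 1" if j: "j \<in> S" for j
  proof (cases "p j \<le> 1")
    case True
    have "1 * p j \<le> ?P * p j" using mult_right_mono[OF P1, of "p j"] assms(2) j by simp
    then show ?thesis using True by simp
  next
    case False
    have "max (p j) 1 \<le> ?P" using le_prod_ge1[OF assms(1) j, of "\<lambda>k. max (p k) 1"] by simp
    then show ?thesis using False by simp
  qed
  then have "(\<Sum>j\<in>S. p j) \<le> (\<Sum>j\<in>S. ?P * min (p j) 1)" by (rule sum_mono)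
  then show ?thesis by (simp add: sum_distrib_left)
qed

lemma supply_earn:
  fixes p :: real
  assumes "p \<ge> 0" "p * (modest_supply (\<lambda>_. 1) (\<lambda>_. p) j - X) = 0"
  shows "min p 1 \<le> p * X"
proof (cases "p = 0")
  case True then show ?thesis by simp
next
  case False
  then have X: "X = modest_supply (\<lambda>_. 1) (\<lambda>_. p) j" using assms by simp
  show ?thesis
  proof (cases "p \<le> 1")
    case True
    then have "1 \<le> 1 / p" using False assms(1) by (simp add: le_divide_eq)
    then show ?thesis using X False True by (simp add: modest_supply_def min_def)
  next
    case f2: False
    then have "1 / p < 1" using False assms(1) by (simp add: divide_less_eq)
    then show ?thesis using X False f2 by (simp add: modest_supply_def min_def)
  qed
qed

theorem mainTheorem3:
  fixes B :: "'a set" and G :: "'b set"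
    and v :: "'a \<Rightarrow> 'b \<Rightarrow> real" and c :: "'a \<Rightarrow> real"
    and x :: "'a \<Rightarrow> 'b \<Rightarrow> real" and p :: "'b \<Rightarrow> real"
    and S :: "'a \<Rightarrow> 'b set"
  assumes "finite B" and "finite G" and "card G \<ge> card B"
    and "\<forall>i\<in>B. \<forall>j\<in>G. v i j \<ge> 0"
    and "\<forall>i\<in>B. c i > 0"
    and "\<forall>i\<in>B. \<forall>j\<in>G. v i j \<le> c i"
    and "money_clearing B G v (\<lambda>_. 1) (\<lambda>_. 1)"
    and "tm_equilibrium B G v c (\<lambda>_. 1) (\<lambda>_. 1) x p"
    and "integral_allocation B G S"
  shows "(\<Prod>i\<in>B. ba_val (norm_val B G v p) (norm_cap B G v c p) i (S i)) powr (1 / real (card B))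
    \<le> ((\<Prod>i\<in>capped_buyers B G v c x. norm_cap B G v c p i) * (\<Prod>j\<in>{j\<in>G. p j > 1}. p j))
        powr (1 / real (card B))"
proof -
  note fB = assms(1) and fG = assms(2)
  define B0 where "B0 = zero_buyers B G v p"
  define Bc where "Bc = capped_buyers B G v c x"
  define nv where "nv = norm_val B G v p"
  define nc where "nc = norm_cap B G v c p"
  define t where "t i = ba_val nv nc i (S i)" for i
  define s where "s i = (\<Sum>j\<in>G. p j * x i j)" for i
  define P where "P i = (\<Prod>j\<in>S i. max (p j) 1)" for i
  define E where "E i = (\<Sum>j\<in>S i. min (p j) 1)" for i
  define K where "K i = (if i \<in> Bc then nc i else 1)" for i
  define w where "w i = (if i \<in> Bc then (if i \<in> B0 then 0 else nc i) else 1)" for i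
  have pnn: "\<forall>j\<in>G. p j \<ge> 0"
    and sup: "\<forall>j\<in>G. p j * (modest_supply (\<lambda>_. 1) p j - (\<Sum>i\<in>B. x i j)) = 0"
    and ag: "\<forall>i\<in>B. demand_bundle G v c (\<lambda>_. 1) p i (x i) \<and> thrifty G v p i (x i) \<and> modest G v c i (x i)"
    using assms(8) by (auto simp: tm_equilibrium_def)
  have SG: "\<forall>i\<in>B. S i \<subseteq> G" and Sdisj: "\<forall>i\<in>B. \<forall>k\<in>B. i \<noteq> k \<longrightarrow> S i \<inter> S k = {}"
    and Sun: "(\<Union>i\<in>B. S i) = G"
    using assms(9) by (auto simp: integral_allocation_def)
  have finS: "\<And>i. i \<in> B \<Longrightarrow> finite (S i)" using SG fG finite_subset by blast
  have Bc_sub: "Bc \<subseteq> B" by (auto simp: Bc_def capped_buyers_def)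
  have per: "0 \<le> t i \<and> t i \<le> P i * K i * exp (E i - w i) \<and> s i \<le> w i \<and> 1 \<le> P i \<and> 0 \<le> E i
             \<and> 0 < K i" if iB: "i \<in> B" for i
  proof -
    have Gne: "G \<noteq> {}"
    proof
      assume "G = {}"
      then have "card B = 0" using assms(3) by simp
      then show False using iB fB by simp
    qed
    have dem: "demand_bundle G v c (\<lambda>_. 1) p i (x i)" and th: "thrifty G v p i (x i)"
      and md: "modest G v c i (x i)" using ag iB by auto
    have aff: "affordable G (\<lambda>_. 1) p i (x i)" using dem by (simp add: demand_bundle_def)
    have xnn: "\<forall>j\<in>G. x i j \<ge> 0" and s1: "s i \<le> 1" using aff by (auto simp: affordable_def s_def)
    have ci: "c i > 0" using assms(5) iB by auto
    have vnn: "\<forall>j\<in>G. v i j \<ge> 0" using assms(4) iB by auto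
    have P1: "1 \<le> P i" unfolding P_def by (intro prod_ge_1) auto
    have E0: "0 \<le> E i" unfolding E_def using SG iB pnn by (intro sum_nonneg) auto
    have t_eq: "t i = min (nc i) (\<Sum>j\<in>S i. nv i j)" by (simp add: t_def ba_val_def)
    show ?thesis
    proof (cases "i \<in> B0")
      case True
      have cap: "i \<in> Bc" using B0_capped[OF fG _ dem ci vnn] True iB
        by (simp add: B0_def Bc_def capped_buyers_def)
      have nvv: "nv i j = v i j" for j using True by (simp add: nv_def norm_val_def B0_def)
      have ncc: "nc i = c i" using True by (simp add: nc_def norm_cap_def B0_def)
      have sv: "0 \<le> (\<Sum>j\<in>S i. nv i j)" unfolding nvv using SG iB vnn by (intro sum_nonneg) auto
      have t1: "0 \<le> t i" "t i \<le> c i" using t_eq ncc sv ci by auto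
      have "1 \<le> exp (E i)" using E0 by simp
      then have "1 \<le> P i * exp (E i)" using mult_mono[of 1 "P i" 1 "exp (E i)"] P1 by simp
      then have "c i \<le> c i * (P i * exp (E i))" using ci by simp
      then have b: "t i \<le> P i * K i * exp (E i - w i)" using t1 cap True
        by (simp add: K_def w_def ncc mult.commute mult.left_commute)
      have "s i = 0" using B0_spend[OF fG _ xnn th] True by (simp add: s_def B0_def)
      then show ?thesis using t1 b P1 E0 cap True ci ncc by (simp add: w_def K_def)
    next
      case False
      have nb: "i \<notin> zero_buyers B G v p" using False by (simp add: B0_def)
      have nvp: "\<forall>j\<in>G. nv i j \<le> p j \<and> 0 \<le> nv i j"
        using nv_le_p[OF fG Gne pnn vnn iB nb] by (simp add: nv_def)
      obtain a where a: "a \<ge> 0" "mbb_ratio G v p i = ereal a" using alpha_fin[OF fG Gne pnn vnn iB nb] by blast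
      have nc0: "0 \<le> nc i" using a nb ci by (simp add: nc_def norm_cap_def)
      have sv0: "0 \<le> (\<Sum>j\<in>S i. nv i j)" using SG iB nvp by (intro sum_nonneg) auto
      have svp: "(\<Sum>j\<in>S i. nv i j) \<le> (\<Sum>j\<in>S i. p j)" using SG iB nvp by (intro sum_mono) auto
      also have "\<dots> \<le> P i * E i" unfolding P_def E_def
        using bin_bound[OF finS[OF iB], of p] SG iB pnn by auto
      finally have sPE: "(\<Sum>j\<in>S i. nv i j) \<le> P i * E i" .
      have t0: "0 \<le> t i" using t_eq nc0 sv0 by simp
      show ?thesis
      proof (cases "i \<in> Bc")
        case cap: True
        have ut: "bundle_util G v c i (x i) = c i" using cap by (simp add: Bc_def capped_buyers_def)
        have ncs: "nc i = s i \<and> 0 < nc i"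
          using capped_spend[OF fG Gne pnn vnn iB nb xnn th md ut ci] by (simp add: nc_def s_def)
        have "t i \<le> min (nc i) (P i * E i)" using t_eq sPE by auto
        also have "\<dots> \<le> P i * nc i * exp (E i - nc i)"
          using key_ineq[of "nc i" "P i" "E i"] ncs s1 P1 E0 by simp
        finally show ?thesis using t0 cap False ncs P1 E0 by (simp add: K_def w_def)
      next
        case ncap: False
        have "E i \<le> exp (E i - 1)" using exp_ge_add_one_self[of "E i - 1"] by simp
        then have "P i * E i \<le> P i * exp (E i - 1)" using P1 by simp
        then have "t i \<le> P i * exp (E i - 1)" using t_eq sPE by linarith
        then show ?thesis using t0 ncap s1 P1 E0 by (simp add: K_def w_def)
      qed
    qed
  qed
  have sumE: "(\<Sum>i\<in>B. E i) = (\<Sum>j\<in>G. min (p j) 1)"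
    unfolding E_def Sun[symmetric] using fB finS Sdisj by (subst sum.UNION_disjoint) auto
  also have "\<dots> \<le> (\<Sum>j\<in>G. p j * (\<Sum>i\<in>B. x i j))"
  proof (rule sum_mono)
    fix j assume j: "j \<in> G"
    have "p j * (modest_supply (\<lambda>_. 1) (\<lambda>_. p j) j - (\<Sum>i\<in>B. x i j)) = 0"
      using sup j by (simp add: modest_supply_def)
    from supply_earn[OF _ this] pnn j show "min (p j) 1 \<le> p j * (\<Sum>i\<in>B. x i j)" by auto
  qed
  also have "\<dots> = (\<Sum>i\<in>B. s i)"
    unfolding s_def sum_distrib_left by (rule sum.swap)
  also have "\<dots> \<le> (\<Sum>i\<in>B. w i)" using per by (intro sum_mono) auto
  finally have Ew: "(\<Sum>i\<in>B. E i) \<le> (\<Sum>i\<in>B. w i)" .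
  have "(\<Prod>i\<in>B. t i) \<le> (\<Prod>i\<in>B. P i * K i * exp (E i - w i))"
    using per by (intro prod_mono) auto
  also have "\<dots> = (\<Prod>i\<in>B. P i) * (\<Prod>i\<in>B. K i) * exp ((\<Sum>i\<in>B. E i) - (\<Sum>i\<in>B. w i))"
  proof -
    have "exp ((\<Sum>i\<in>B. E i) - (\<Sum>i\<in>B. w i)) = (\<Prod>i\<in>B. exp (E i - w i))"
      by (simp add: exp_sum[OF fB, symmetric] sum_subtractf)
    then show ?thesis by (simp add: prod.distrib)
  qed
  also have "\<dots> \<le> (\<Prod>i\<in>B. P i) * (\<Prod>i\<in>B. K i)"
  proof -
    have Pn: "\<forall>i\<in>B. 0 \<le> P i" and Kn: "\<forall>i\<in>B. 0 \<le> K i" using per by (meson less_imp_le order_trans zero_le_one)+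
    have "0 \<le> (\<Prod>i\<in>B. P i) * (\<Prod>i\<in>B. K i)"
      using Pn Kn by (intro mult_nonneg_nonneg prod_nonneg) auto
    moreover have "exp ((\<Sum>i\<in>B. E i) - (\<Sum>i\<in>B. w i)) \<le> 1" using Ew by simp
    ultimately show ?thesis by (rule mult_left_le[rotated])
  qed
  also have "(\<Prod>i\<in>B. P i) = (\<Prod>j\<in>{j\<in>G. p j > 1}. p j)"
  proof -
    have "(\<Prod>i\<in>B. P i) = (\<Prod>j\<in>G. max (p j) 1)"
      unfolding P_def Sun[symmetric] using fB finS Sdisj by (subst prod.UNION_disjoint) auto
    also have "\<dots> = (\<Prod>j\<in>G. if p j > 1 then p j else 1)" by (rule prod.cong) auto
    also have "\<dots> = (\<Prod>j\<in>{j\<in>G. p j > 1}. p j)" using fG by (simp add: prod.inter_filter)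
    finally show ?thesis .
  qed
  also have "(\<Prod>i\<in>B. K i) = (\<Prod>i\<in>Bc. nc i)"
  proof -
    have "(\<Prod>i\<in>{i\<in>B. i \<in> Bc}. nc i) = (\<Prod>i\<in>B. K i)" using fB by (simp add: prod.inter_filter K_def)
    moreover have "{i\<in>B. i \<in> Bc} = Bc" using Bc_sub by auto
    ultimately show ?thesis by simp
  qed
  finally have main: "(\<Prod>i\<in>B. t i) \<le> (\<Prod>j\<in>{j\<in>G. p j > 1}. p j) * (\<Prod>i\<in>Bc. nc i)" .
  have t0: "0 \<le> (\<Prod>i\<in>B. t i)" using per by (intro prod_nonneg) auto
  have "(\<Prod>i\<in>B. t i) powr (1 / real (card B)) \<le> ((\<Prod>i\<in>Bc. nc i) * (\<Prod>j\<in>{j\<in>G. p j > 1}. p j)) powr (1 / real (card B))"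
    using main t0 by (intro powr_mono2) (auto simp: mult.commute)
  then show ?thesis by (simp add: t_def nv_def nc_def Bc_def)
qed

end
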